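(* Let $\mathbf A\in\mathbb R^{m\times n}$, let $k\ge 1$ be an integer, and let $\alpha>0$ and $c>0$ be fixed. The following are equivalent: (i) for every $k$-sparse vector $\mathbf x^0\in\mathbb R^n$ with $\|\mathbf x^0\|_\infty=c$, the vector $\mathbf x^0$ is the unique minimizer of problem (P2) with $\mathbf b=\mathbf A\mathbf x^0$; (ii) for every $\mathbf h\in\mathrm{Null}(\mathbf A)$ and every coordinate set $\mathcal S\subset\{1,\dots,n\}$ with $|\mathcal S|\le k$, $$\Big(1+\frac{c}{\alpha}\Big)\|\mathbf h_{\mathcal S}\|_1\le \|\mathbf h_{\mathcal S^c}\|_1 .$$
   Context: Problem (P2) is $\min_{\mathbf x\in\mathbb R^n}\{\|\mathbf x\|_1+\frac{1}{2\alpha}\|\mathbf x\|_2^2:\ \mathbf A\mathbf x=\mathbf b\}$. A vector is $k$-sparse if it has at most $k$ nonzero entries. For a vector $\mathbf h$ and index set $\mathcal S$, $\mathbf h_{\mathcal S}$ denotes the restriction of $\mathbf h$ to the coordinates in $\mathcal S$, and $\mathcal S^c=\{1,\dots,n\}\setminus\mathcal S$. *)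

theory Defs
  imports "HOL-Analysis.Analysis"
begin

definition l1norm :: "real ^ 'n \<Rightarrow> real" where
  "l1norm x = (\<Sum>i\<in>UNIV. \<bar>x $ i\<bar>)"

definition l1norm_on :: "'n set \<Rightarrow> real ^ 'n \<Rightarrow> real" where
  "l1norm_on S h = (\<Sum>i\<in>S. \<bar>h $ i\<bar>)"

definition linfnorm :: "real ^ 'n \<Rightarrow> real" where
  "linfnorm x = Max ((\<lambda>i. \<bar>x $ i\<bar>) ` UNIV)"

definition ksparse :: "nat \<Rightarrow> real ^ 'n \<Rightarrow> bool" where
  "ksparse k x \<longleftrightarrow> card {i. x $ i \<noteq> 0} \<le> k"

definition P2obj :: "real \<Rightarrow> real ^ 'n \<Rightarrow> real" where
  "P2obj \<alpha> x = l1norm x + (1 / (2 * \<alpha>)) * (norm x)\<^sup>2"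

definition P2_unique_minimizer ::
  "real \<Rightarrow> real ^ 'n ^ 'm \<Rightarrow> real ^ 'm \<Rightarrow> real ^ 'n \<Rightarrow> bool" where
  "P2_unique_minimizer \<alpha> A b x \<longleftrightarrow>
     A *v x = b \<and> (\<forall>y. A *v y = b \<and> y \<noteq> x \<longrightarrow> P2obj \<alpha> x < P2obj \<alpha> y)"

end

theory Submission
  imports Defs
begin

lemma P2obj_sum: "P2obj a x = (\<Sum>i\<in>UNIV. \<bar>x$i\<bar> + (x$i)^2/(2*a))"
  unfolding P2obj_def l1norm_def power2_norm_eq_inner inner_vec_def
  by (simp add: sum.distrib sum_divide_distrib power2_eq_square)

lemma P2obj_diff:
  assumes "a > 0"
  shows "P2obj a (x+h) - P2obj a x =
     (\<Sum>i\<in>UNIV. \<bar>x$i+h$i\<bar> - \<bar>x$i\<bar> + x$i*h$i/a + (h$i)^2/(2*a))"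
proof -
  have "P2obj a (x+h) - P2obj a x = (\<Sum>i\<in>UNIV. (\<bar>x$i+h$i\<bar> + (x$i+h$i)^2/(2*a)) - (\<bar>x$i\<bar> + (x$i)^2/(2*a)))"
    by (simp add: P2obj_sum sum_subtractf)
  also have "\<dots> = (\<Sum>i\<in>UNIV. \<bar>x$i+h$i\<bar> - \<bar>x$i\<bar> + x$i*h$i/a + (h$i)^2/(2*a))"
    using assms by (intro sum.cong) (auto simp: field_simps power2_eq_square)
  finally show ?thesis .
qed

lemma sum_split: "sum (f::'n::finite \<Rightarrow> real) UNIV = sum f T + sum f (-T)"
proof -
  have "UNIV = T \<union> -T" by auto
  then have "sum f UNIV = sum f (T \<union> -T)" by simp
  also have "\<dots> = sum f T + sum f (-T)" by (rule sum.union_disjoint) auto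
  finally show ?thesis .
qed

theorem mainTheorem1:
  fixes A :: "real ^ 'n ^ 'm" and k :: nat and \<alpha> c :: real
  assumes "k \<ge> 1" and "\<alpha> > 0" and "c > 0"
  shows "(\<forall>x0 :: real ^ 'n. ksparse k x0 \<and> linfnorm x0 = c \<longrightarrow>
            P2_unique_minimizer \<alpha> A (A *v x0) x0)
     \<longleftrightarrow> (\<forall>h S. A *v h = 0 \<and> card S \<le> k \<longrightarrow>
            (1 + c / \<alpha>) * l1norm_on S h \<le> l1norm_on (- S) h)"
proof
  assume H: "\<forall>x0 :: real ^ 'n. ksparse k x0 \<and> linfnorm x0 = c \<longrightarrow>
            P2_unique_minimizer \<alpha> A (A *v x0) x0"
  show "\<forall>h S. A *v h = 0 \<and> card S \<le> k \<longrightarrow>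
            (1 + c / \<alpha>) * l1norm_on S h \<le> l1norm_on (- S) h"
  proof (intro allI impI)
    fix h :: "real^'n" and S :: "'n set"
    assume hS: "A *v h = 0 \<and> card S \<le> k"
    show "(1 + c / \<alpha>) * l1norm_on S h \<le> l1norm_on (- S) h"
    proof (rule ccontr)
      assume neg: "\<not> ?thesis"
      define D where "D = (1 + c / \<alpha>) * l1norm_on S h - l1norm_on (- S) h"
      have D: "D > 0" using neg unfolding D_def by simp
      have nn: "l1norm_on (-S) h \<ge> 0" unfolding l1norm_on_def by (simp add: sum_nonneg)
      obtain j where j: "j \<in> S" "h$j \<noteq> 0"
      proof (rule ccontr)
        assume "\<not> thesis"
        then have "\<forall>i\<in>S. h$i = 0" using that by blast
        then have "l1norm_on S h = 0" unfolding l1norm_on_def by simp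
        then show False using D nn unfolding D_def by simp
      qed
      define x0 :: "real^'n" where "x0 = (\<chi> i. if i \<in> S then - c * sgn (h$i) else 0)"
      define L where "L = (\<Sum>i\<in>UNIV. \<bar>h$i\<bar>)"
      define Q where "Q = (\<Sum>i\<in>UNIV. (h$i)^2)"
      have L0: "L \<ge> 0" unfolding L_def by (simp add: sum_nonneg)
      have Q0: "Q \<ge> 0" unfolding Q_def by (simp add: sum_nonneg)
      define t where "t = min (c / (L+1)) (\<alpha> * D / (Q+1))"
      have t0: "t > 0" unfolding t_def using assms D L0 Q0 by simp
      have hiL: "\<bar>h$i\<bar> \<le> L" for i
        unfolding L_def by (rule member_le_sum) auto
      have tL: "t * \<bar>h$i\<bar> < c" for i
      proof -
        have "t * \<bar>h$i\<bar> \<le> c/(L+1) * L"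
          using t0 hiL[of i] L0 assms unfolding t_def
          by (intro mult_mono) auto
        also have "\<dots> < c" using L0 assms by (simp add: field_simps)
        finally show ?thesis .
      qed
      have tQ: "t * Q < 2 * \<alpha> * D"
      proof -
        have "t * Q \<le> \<alpha> * D / (Q+1) * Q"
          using t0 Q0 unfolding t_def by (intro mult_mono) auto
        also have "\<dots> < 2 * \<alpha> * D" using Q0 assms D
          by (simp add: field_simps) (smt (verit) mult_pos_pos mult_nonneg_nonneg)
        finally show ?thesis .
      qed
      have sp: "ksparse k x0"
      proof -
        have "{i. x0 $ i \<noteq> 0} \<subseteq> S" unfolding x0_def by auto
        then have "card {i. x0 $ i \<noteq> 0} \<le> card S" by (intro card_mono) auto
        then show ?thesis unfolding ksparse_def using hS by simp
      qed
      have inf: "linfnorm x0 = c"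
      proof -
        have "\<bar>x0$i\<bar> \<le> c" for i unfolding x0_def using assms
          by (auto simp: abs_mult sgn_if)
        moreover have "\<bar>x0$j\<bar> = c" unfolding x0_def using assms j
          by (auto simp: abs_mult sgn_if)
        ultimately show ?thesis unfolding linfnorm_def
          by (intro antisym Max.boundedI Max_ge_iff[THEN iffD2]) auto
      qed
      have um: "P2_unique_minimizer \<alpha> A (A *v x0) x0" using H sp inf by blast
      define y where "y = x0 + t *\<^sub>R h"
      have Ay: "A *v y = A *v x0" unfolding y_def
        using hS by (simp add: matrix_vector_right_distrib matrix_vector_mult_scaleR)
      have yne: "y \<noteq> x0"
      proof
        assume "y = x0"
        then have "t *\<^sub>R h = 0" unfolding y_def by simp
        then show False using t0 j by auto
      qed
      have lt: "P2obj \<alpha> x0 < P2obj \<alpha> y" using um Ay yne unfolding P2_unique_minimizer_def by blast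
      define g where "g i = \<bar>x0$i+(t *\<^sub>R h)$i\<bar> - \<bar>x0$i\<bar> + x0$i*(t *\<^sub>R h)$i/\<alpha> + ((t *\<^sub>R h)$i)^2/(2*\<alpha>)" for i
      have diff: "P2obj \<alpha> y - P2obj \<alpha> x0 = sum g UNIV"
        unfolding y_def g_def by (rule P2obj_diff[OF assms(2)])
      have gS: "g i = - t * (1 + c/\<alpha>) * \<bar>h$i\<bar> + t^2 * (h$i)^2/(2*\<alpha>)" if "i \<in> S" for i
      proof (cases "h$i = 0")
        case True then show ?thesis unfolding g_def x0_def using that by simp
      next
        case False
        have ab: "\<bar>- c * sgn (h$i) + t * h$i\<bar> = c - t * \<bar>h$i\<bar>"
          using tL[of i] t0 False assms
          by (cases "h$i > 0") (auto simp: sgn_if abs_if)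
        show ?thesis unfolding g_def x0_def using that False ab assms
          by (cases "h$i > 0") (auto simp: sgn_if field_simps power2_eq_square)
      qed
      have gN: "g i = t * \<bar>h$i\<bar> + t^2 * (h$i)^2/(2*\<alpha>)" if "i \<notin> S" for i
        unfolding g_def x0_def using that t0 by (simp add: abs_mult power_mult_distrib)
      have sS: "sum g S = - t * (1 + c/\<alpha>) * l1norm_on S h + t^2/(2*\<alpha>) * (\<Sum>i\<in>S. (h$i)^2)"
      proof -
        have "sum g S = (\<Sum>i\<in>S. (- t * (1 + c/\<alpha>)) * \<bar>h$i\<bar> + (t^2/(2*\<alpha>)) * (h$i)^2)"
          by (rule sum.cong) (simp_all add: gS)
        also have "\<dots> = - t * (1 + c/\<alpha>) * l1norm_on S h + t^2/(2*\<alpha>) * (\<Sum>i\<in>S. (h$i)^2)"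
          unfolding l1norm_on_def by (simp only: sum.distrib sum_distrib_left)
        finally show ?thesis .
      qed
      have sN: "sum g (-S) = t * l1norm_on (-S) h + t^2/(2*\<alpha>) * (\<Sum>i\<in>-S. (h$i)^2)"
      proof -
        have "sum g (-S) = (\<Sum>i\<in>-S. t * \<bar>h$i\<bar> + (t^2/(2*\<alpha>)) * (h$i)^2)"
          by (rule sum.cong) (simp_all add: gN)
        also have "\<dots> = t * l1norm_on (-S) h + t^2/(2*\<alpha>) * (\<Sum>i\<in>-S. (h$i)^2)"
          unfolding l1norm_on_def by (simp only: sum.distrib sum_distrib_left)
        finally show ?thesis .
      qed
      have "sum g UNIV = - t * D + t^2/(2*\<alpha>) * Q"
        using sum_split[of g S] sum_split[of "\<lambda>i. (h$i)^2" S] sS sN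
        unfolding D_def Q_def by (simp add: algebra_simps)
      also have "\<dots> = t * (t * Q - 2 * \<alpha> * D) / (2 * \<alpha>)"
        using assms by (simp add: field_simps power2_eq_square)
      also have "\<dots> < 0" using t0 tQ assms
        by (intro divide_neg_pos mult_pos_neg) auto
      finally show False using diff lt by simp
    qed
  qed
next
  assume H: "\<forall>h S. A *v h = 0 \<and> card S \<le> k \<longrightarrow>
            (1 + c / \<alpha>) * l1norm_on S h \<le> l1norm_on (- S) h"
  show "\<forall>x0 :: real ^ 'n. ksparse k x0 \<and> linfnorm x0 = c \<longrightarrow>
            P2_unique_minimizer \<alpha> A (A *v x0) x0"
  proof (intro allI impI)
    fix x0 :: "real^'n"
    assume x0: "ksparse k x0 \<and> linfnorm x0 = c"
    define T where "T = {i. x0$i \<noteq> 0}"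
    have cT: "card T \<le> k" using x0 unfolding T_def ksparse_def by simp
    have xc: "\<bar>x0$i\<bar> \<le> c" for i
      using x0 unfolding linfnorm_def by (metis Max_ge finite finite_imageI rangeI)
    show "P2_unique_minimizer \<alpha> A (A *v x0) x0"
      unfolding P2_unique_minimizer_def
    proof (intro conjI refl allI impI)
      fix y assume yy: "A *v y = A *v x0 \<and> y \<noteq> x0"
      define h where "h = y - x0"
      have yh: "y = x0 + h" unfolding h_def by simp
      have Ah: "A *v h = 0" unfolding h_def using yy
        by (simp add: matrix_vector_mult_diff_distrib)
      have ineq: "(1 + c / \<alpha>) * l1norm_on T h \<le> l1norm_on (- T) h"
        using H Ah cT by blast
      define g where "g i = \<bar>x0$i+h$i\<bar> - \<bar>x0$i\<bar> + x0$i*h$i/\<alpha> + (h$i)^2/(2*\<alpha>)" for i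
      define w where "w i = (if i \<in> T then - ((1 + c/\<alpha>) * \<bar>h$i\<bar>) else \<bar>h$i\<bar>)" for i
      have diff: "P2obj \<alpha> y - P2obj \<alpha> x0 = sum g UNIV"
        unfolding yh g_def by (rule P2obj_diff[OF assms(2)])
      have gw: "g i \<ge> w i + (h$i)^2/(2*\<alpha>)" for i
      proof (cases "i \<in> T")
        case True
        have a1: "\<bar>x0$i+h$i\<bar> - \<bar>x0$i\<bar> \<ge> - \<bar>h$i\<bar>" by linarith
        have "\<bar>x0$i*h$i\<bar> \<le> c * \<bar>h$i\<bar>" unfolding abs_mult
          by (rule mult_right_mono[OF xc]) simp
        then have "x0$i*h$i \<ge> - (c * \<bar>h$i\<bar>)" by linarith
        then have a2: "x0$i*h$i/\<alpha> \<ge> - (c/\<alpha> * \<bar>h$i\<bar>)" using assms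
          by (simp add: field_simps)
        show ?thesis unfolding g_def w_def using True a1 a2 by (simp add: algebra_simps)
      next
        case False
        then show ?thesis unfolding g_def w_def T_def by simp
      qed
      have sw: "sum w UNIV \<ge> 0"
      proof -
        have "sum w T = - ((1 + c/\<alpha>) * l1norm_on T h)"
          unfolding w_def l1norm_on_def by (simp add: sum_negf sum_distrib_left)
        moreover have "sum w (-T) = l1norm_on (-T) h"
          unfolding w_def l1norm_on_def by simp
        ultimately show ?thesis using sum_split[of w T] ineq by simp
      qed
      obtain j where j: "h$j \<noteq> 0"
        using yy unfolding h_def by (metis vec_eq_iff vector_minus_component right_minus_eq)
      have sq: "(\<Sum>i\<in>UNIV. (h$i)^2/(2*\<alpha>)) > 0"
        using j assms by (intro sum_pos2[of UNIV j]) auto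
      have "sum g UNIV \<ge> sum w UNIV + (\<Sum>i\<in>UNIV. (h$i)^2/(2*\<alpha>))"
        using gw by (simp add: sum.distrib[symmetric] sum_mono)
      then show "P2obj \<alpha> x0 < P2obj \<alpha> y" using diff sw sq by simp
    qed
  qed
qed

end
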